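(* Let $(S^\Omega,\mathcal T)$ be a resource theory with a currency $\mathcal C$ (value function $\mathrm{Val}$) independent of its target $\mathcal S$, and assume $\mathcal C$ is good for the poor. If $V\in\mathcal S$ satisfies $\mathrm{Balance}(V\to V\mid C)>0$ for some $C\in\mathcal C$, then $$\mathrm{Yield}(V)\ge\mathrm{Balance}(V\to V\mid C)>0=\mathrm{Cost}(V).$$
   Context: A resource theory $(S^\Omega,\mathcal T)$ consists of a set $\Omega$, the specification space $S^\Omega$ of all non-empty subsets of $\Omega$ (resources), and a set $\mathcal T$ of maps $f:S^\Omega\to S^\Omega$ acting element-wise, $f(V)=\bigcup_{\nu\in V} f(\{\nu\})$. $V\to W$ iff some $f\in\mathcal T$ has $f(V)\subseteq W$; $\to$ is assumed to be a pre-order. $\mathcal C\subseteq S^\Omega$ is a currency for target $\mathcal S\subseteq S^\Omega$ if (Order) any two elements of $\mathcal C$ are comparable under $\to$ and $\Omega\in\mathcal C$; (Universality) $\Omega\in\mathcal S$ and every $V\in\mathcal S$ has $C,C'\in\mathcal C$ with $C\to V$, $V\to C'$. A value function $\mathrm{Val}:\mathcal C\to\mathbb R_{\ge0}$ satisfies $\mathrm{Val}(C')\ge\mathrm{Val}(C)\iff C'\to C$ and $\mathrm{Val}(\Omega)=0$; $c_{\sup}=\sup_{C\in\mathcal C}\mathrm{Val}(C)$ (possibly $\infty$). $\mathrm{Cost}(V)=\inf\{\mathrm{Val}(C): C\in\mathcal C,\ C\to V\}$, $\mathrm{Yield}(V)=\sup\{\mathrm{Val}(C): C\in\mathcal C,\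 V\to C\}$. Independence: $C\cap V\ne\emptyset$ for all $C\in\mathcal C,V\in\mathcal S$, and $C\to C'$ implies $C\cap V\to C'\cap V$ for all $V\in\mathcal S$. Balance: $\mathrm{Balance}(V\to W\mid C)=\sup\{\mathrm{Val}(C')-\mathrm{Val}(C): C'\in\mathcal C,\ V\cap C\to W\cap C'\}$ (with $\sup\emptyset=-\infty$). Fairness conditions: for $V,W\in\mathcal S$ and $C_1,C_2\in\mathcal C$ with $V\cap C_1\to W\cap C_2$, let $\Delta=\mathrm{Val}(C_2)-\mathrm{Val}(C_1)$. (F1): for a given $C_1'\in\mathcal C$ with $-\Delta\le\mathrm{Val}(C_1')<c_{\sup}-\Delta$ there is $C_2'\in\mathcal C$ with $V\cap C_1'\to W\cap C_2'$ and $\mathrm{Val}(C_2')-\mathrm{Val}(C_1')=\Delta$. (F2): for a given $C_2'\in\mathcal C$ with $\Delta\le\mathrm{Val}(C_2')$ there is $C_1'\in\mathcal C$ with $V\cap C_1'\to W\cap C_2'$ and $\mathrm{Val}(C_2')-\mathrm{Val}(C_1')=\Delta$. The currency is good for the poor if, for all such data, (F1) holds for every admissible $C_1'$ with $\mathrm{Val}(C_1')\le\mathrm{Val}(C_1)$ and (F2) holds for every admissible $C_2'$ with $\mathrm{Val}(C_2')\le\mathrm{Val}(C_2)$. *)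

theory Defs
  imports "HOL-Analysis.Analysis"
begin

definition spec_space :: "'a set \<Rightarrow> 'a set set" where
  "spec_space \<Omega> = {V. V \<subseteq> \<Omega> \<and> V \<noteq> {}}"

definition conv :: "('a set \<Rightarrow> 'a set) set \<Rightarrow> 'a set \<Rightarrow> 'a set \<Rightarrow> bool" where
  "conv T V W \<longleftrightarrow> (\<exists>f\<in>T. f V \<subseteq> W)"

definition resource_theory :: "'a set \<Rightarrow> ('a set \<Rightarrow> 'a set) set \<Rightarrow> bool" where
  "resource_theory \<Omega> T \<longleftrightarrow>
     (\<forall>f\<in>T. (\<forall>V\<in>spec_space \<Omega>. f V \<in> spec_space \<Omega>) \<and>
             (\<forall>V\<in>spec_space \<Omega>. f V = (\<Union>\<nu>\<in>V. f {\<nu>}))) \<and>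
     (\<forall>V\<in>spec_space \<Omega>. conv T V V) \<and>
     (\<forall>U\<in>spec_space \<Omega>. \<forall>V\<in>spec_space \<Omega>. \<forall>W\<in>spec_space \<Omega>.
        conv T U V \<longrightarrow> conv T V W \<longrightarrow> conv T U W)"

definition currency ::
  "'a set \<Rightarrow> ('a set \<Rightarrow> 'a set) set \<Rightarrow> 'a set set \<Rightarrow> 'a set set \<Rightarrow> bool" where
  "currency \<Omega> T \<C> \<S> \<longleftrightarrow>
     \<C> \<subseteq> spec_space \<Omega> \<and> \<S> \<subseteq> spec_space \<Omega> \<and>
     (\<forall>C\<in>\<C>. \<forall>C'\<in>\<C>. conv T C C' \<or> conv T C' C) \<and> \<Omega> \<in> \<C> \<and>
     \<Omega> \<in> \<S> \<and>
     (\<forall>V\<in>\<S>. (\<exists>C\<in>\<C>. conv T C V) \<and> (\<exists>C'\<in>\<C>. conv T V C'))"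

definition value_function ::
  "'a set \<Rightarrow> ('a set \<Rightarrow> 'a set) set \<Rightarrow> 'a set set \<Rightarrow> ('a set \<Rightarrow> real) \<Rightarrow> bool" where
  "value_function \<Omega> T \<C> Val \<longleftrightarrow>
     (\<forall>C\<in>\<C>. Val C \<ge> 0) \<and>
     (\<forall>C\<in>\<C>. \<forall>C'\<in>\<C>. Val C' \<ge> Val C \<longleftrightarrow> conv T C' C) \<and>
     Val \<Omega> = 0"

definition c_sup :: "'a set set \<Rightarrow> ('a set \<Rightarrow> real) \<Rightarrow> ereal" where
  "c_sup \<C> Val = (SUP C\<in>\<C>. ereal (Val C))"

definition Cost ::
  "('a set \<Rightarrow> 'a set) set \<Rightarrow> 'a set set \<Rightarrow> ('a set \<Rightarrow> real) \<Rightarrow> 'a set \<Rightarrow> ereal" where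
  "Cost T \<C> Val V = (INF C\<in>{C\<in>\<C>. conv T C V}. ereal (Val C))"

definition Yield ::
  "('a set \<Rightarrow> 'a set) set \<Rightarrow> 'a set set \<Rightarrow> ('a set \<Rightarrow> real) \<Rightarrow> 'a set \<Rightarrow> ereal" where
  "Yield T \<C> Val V = (SUP C\<in>{C\<in>\<C>. conv T V C}. ereal (Val C))"

definition independent ::
  "('a set \<Rightarrow> 'a set) set \<Rightarrow> 'a set set \<Rightarrow> 'a set set \<Rightarrow> bool" where
  "independent T \<C> \<S> \<longleftrightarrow>
     (\<forall>C\<in>\<C>. \<forall>V\<in>\<S>. C \<inter> V \<noteq> {}) \<and>
     (\<forall>C\<in>\<C>. \<forall>C'\<in>\<C>. conv T C C' \<longrightarrow> (\<forall>V\<in>\<S>. conv T (C \<inter> V) (C' \<inter> V)))"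

text \<open>Balance; the supremum of the empty set is -infinity (ereal bot).\<close>
definition Balance ::
  "('a set \<Rightarrow> 'a set) set \<Rightarrow> 'a set set \<Rightarrow> ('a set \<Rightarrow> real) \<Rightarrow> 'a set \<Rightarrow> 'a set \<Rightarrow> 'a set \<Rightarrow> ereal" where
  "Balance T \<C> Val V W C =
     (SUP C'\<in>{C'\<in>\<C>. conv T (V \<inter> C) (W \<inter> C')}. ereal (Val C' - Val C))"

definition good_for_the_poor ::
  "('a set \<Rightarrow> 'a set) set \<Rightarrow> 'a set set \<Rightarrow> 'a set set \<Rightarrow> ('a set \<Rightarrow> real) \<Rightarrow> bool" where
  "good_for_the_poor T \<C> \<S> Val \<longleftrightarrow>
     (\<forall>V\<in>\<S>. \<forall>W\<in>\<S>. \<forall>C1\<in>\<C>. \<forall>C2\<in>\<C>. conv T (V \<inter> C1) (W \<inter> C2) \<longrightarrow>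
        (let \<Delta> = Val C2 - Val C1 in
          (\<forall>C1'\<in>\<C>. - \<Delta> \<le> Val C1' \<and> ereal (Val C1') < c_sup \<C> Val - ereal \<Delta> \<and>
                     Val C1' \<le> Val C1 \<longrightarrow>
             (\<exists>C2'\<in>\<C>. conv T (V \<inter> C1') (W \<inter> C2') \<and> Val C2' - Val C1' = \<Delta>)) \<and>
          (\<forall>C2'\<in>\<C>. \<Delta> \<le> Val C2' \<and> Val C2' \<le> Val C2 \<longrightarrow>
             (\<exists>C1'\<in>\<C>. conv T (V \<inter> C1') (W \<inter> C2') \<and> Val C2' - Val C1' = \<Delta>))))"

end

theory Submission
  imports Defs
begin

context
  fixes \<Omega> :: "'a set" and T :: "('a set \<Rightarrow> 'a set) set"
    and \<C> \<S> :: "'a set set" and Val :: "'a set \<Rightarrow> real"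
  assumes RT: "resource_theory \<Omega> T"
    and CU: "currency \<Omega> T \<C> \<S>"
    and VF: "value_function \<Omega> T \<C> Val"
    and IND: "independent T \<C> \<S>"
    and GP: "good_for_the_poor T \<C> \<S> Val"
begin

lemma spC: "C \<in> \<C> \<Longrightarrow> C \<in> spec_space \<Omega>"
  using CU unfolding currency_def by blast

lemma spS: "V \<in> \<S> \<Longrightarrow> V \<in> spec_space \<Omega>"
  using CU unfolding currency_def by blast

lemma OmC: "\<Omega> \<in> \<C>" and OmS: "\<Omega> \<in> \<S>"
  using CU unfolding currency_def by blast+

lemma ValOm: "Val \<Omega> = 0" using VF unfolding value_function_def by blast

lemma Valnn: "C \<in> \<C> \<Longrightarrow> Val C \<ge> 0" using VF unfolding value_function_def by blast

lemma spI: "V \<in> \<S> \<Longrightarrow> C \<in> \<C> \<Longrightarrow> V \<inter> C \<in> spec_space \<Omega>"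
  using IND spS[of V] unfolding independent_def spec_space_def by blast

lemma sp_Om: "\<Omega> \<in> spec_space \<Omega>" using spC OmC by blast

lemma trans: "A \<in> spec_space \<Omega> \<Longrightarrow> B \<in> spec_space \<Omega> \<Longrightarrow> D \<in> spec_space \<Omega>
   \<Longrightarrow> conv T A B \<Longrightarrow> conv T B D \<Longrightarrow> conv T A D"
  using RT unfolding resource_theory_def by blast

lemma sub: assumes "A \<in> spec_space \<Omega>" "B \<in> spec_space \<Omega>" "A \<subseteq> B" shows "conv T A B"
proof -
  have refl: "\<forall>V\<in>spec_space \<Omega>. conv T V V" and el: "\<forall>f\<in>T. (\<forall>V\<in>spec_space \<Omega>. f V = (\<Union>\<nu>\<in>V. f {\<nu>}))"
    using RT unfolding resource_theory_def by blast+
  have "conv T B B" using refl assms(2) by blast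
  then obtain f where f: "f \<in> T" "f B \<subseteq> B" unfolding conv_def by blast
  have "f A = (\<Union>\<nu>\<in>A. f {\<nu>})" "f B = (\<Union>\<nu>\<in>B. f {\<nu>})"
    using el f(1) assms(1,2) by blast+
  then have "f A \<subseteq> f B" using assms(3) by auto
  then show ?thesis using f unfolding conv_def by blast
qed

lemma zero: "C \<in> \<C> \<Longrightarrow> Val C = 0 \<Longrightarrow> conv T \<Omega> C"
  using VF OmC ValOm unfolding value_function_def by force

lemma csup_ge: "C \<in> \<C> \<Longrightarrow> ereal (Val C) \<le> c_sup \<C> Val"
  unfolding c_sup_def by (rule SUP_upper)

lemma ereal_aux: "ereal a \<le> c \<Longrightarrow> b < a \<Longrightarrow> ereal 0 < c - ereal b"
  by (cases c) auto

lemma F1: "V \<in> \<S> \<Longrightarrow> W \<in> \<S> \<Longrightarrow> C1 \<in> \<C> \<Longrightarrow> C2 \<in> \<C> \<Longrightarrow> conv T (V \<inter> C1) (W \<inter> C2)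
  \<Longrightarrow> C1' \<in> \<C> \<Longrightarrow> - (Val C2 - Val C1) \<le> Val C1'
  \<Longrightarrow> ereal (Val C1') < c_sup \<C> Val - ereal (Val C2 - Val C1) \<Longrightarrow> Val C1' \<le> Val C1
  \<Longrightarrow> \<exists>C2'\<in>\<C>. conv T (V \<inter> C1') (W \<inter> C2') \<and> Val C2' - Val C1' = Val C2 - Val C1"
  apply (insert GP)
  apply (unfold good_for_the_poor_def)
  apply (drule bspec, assumption, drule bspec, assumption, drule bspec, assumption,
         drule bspec, assumption, drule mp, assumption)
  apply (unfold Let_def)
  apply (drule conjunct1)
  apply (drule bspec[where x=C1'], assumption)
  apply (erule mp)
  apply (intro conjI; assumption)
  done

lemma F2: "V \<in> \<S> \<Longrightarrow> W \<in> \<S> \<Longrightarrow> C1 \<in> \<C> \<Longrightarrow> C2 \<in> \<C> \<Longrightarrow> conv T (V \<inter> C1) (W \<inter> C2)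
  \<Longrightarrow> C2' \<in> \<C> \<Longrightarrow> Val C2 - Val C1 \<le> Val C2' \<Longrightarrow> Val C2' \<le> Val C2
  \<Longrightarrow> \<exists>C1'\<in>\<C>. conv T (V \<inter> C1') (W \<inter> C2') \<and> Val C2' - Val C1' = Val C2 - Val C1"
  apply (insert GP)
  apply (unfold good_for_the_poor_def)
  apply (drule bspec, assumption, drule bspec, assumption, drule bspec, assumption,
         drule bspec, assumption, drule mp, assumption)
  apply (unfold Let_def)
  apply (drule conjunct2)
  apply (drule bspec[where x=C2'], assumption)
  apply (erule mp)
  apply (intro conjI; assumption)
  done

lemma ladder:
  assumes V: "V \<in> \<S>" and C: "C \<in> \<C>" and C': "C' \<in> \<C>"
    and cv: "conv T (V \<inter> C) (V \<inter> C')" and lt: "Val C' > Val C"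
  shows "\<exists>D\<in>\<C>. Val D = Val C' - Val C \<and> conv T V (V \<inter> D)"
proof (cases "Val C = 0")
  case True
  have "conv T \<Omega> C" using zero[OF C True] .
  then have "conv T (\<Omega> \<inter> V) (C \<inter> V)" using IND OmC C V unfolding independent_def by blast
  moreover have "\<Omega> \<inter> V = V" using spS[OF V] unfolding spec_space_def by blast
  ultimately have "conv T V (V \<inter> C)" by (simp add: Int_commute)
  then have "conv T V (V \<inter> C')" by (rule trans[OF spS[OF V] spI[OF V C] spI[OF V C'] _ cv])
  then show ?thesis using C' True by auto
next
  case False
  then have pos: "Val C > 0" using Valnn[OF C] by simp
  have "ereal 0 < c_sup \<C> Val - ereal (Val C' - Val C)"
    using ereal_aux[OF csup_ge[OF C']] pos by simp
  then obtain C2' where "C2' \<in> \<C>" "conv T (V \<inter> \<Omega>) (V \<inter> C2')" "Val C2' - Val \<Omega> = Val C' - Val C"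
    using F1[OF V V C C' cv OmC] lt pos ValOm by auto
  moreover have "V \<inter> \<Omega> = V" using spS[OF V] unfolding spec_space_def by blast
  ultimately show ?thesis using ValOm by auto
qed

lemma induct_step:
  assumes V: "V \<in> \<S>" and D: "D \<in> \<C>" and dpos: "Val D > 0" and VD: "conv T V (V \<inter> D)"
  shows "\<forall>C1\<in>\<C>. conv T C1 V \<longrightarrow> Val C1 \<le> real n * Val D \<longrightarrow> conv T \<Omega> V"
proof (induction n)
  case 0
  show ?case
  proof (intro ballI impI)
    fix C1 assume C1: "C1 \<in> \<C>" "conv T C1 V" "Val C1 \<le> real 0 * Val D"
    then have "Val C1 = 0" using Valnn[OF C1(1)] by simp
    then have "conv T \<Omega> C1" by (rule zero[OF C1(1)])
    then show "conv T \<Omega> V" by (rule trans[OF sp_Om spC[OF C1(1)] spS[OF V] _ C1(2)])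
  qed
next
  case (Suc n)
  show ?case
  proof (intro ballI impI)
    fix C1 assume C1: "C1 \<in> \<C>" "conv T C1 V" "Val C1 \<le> real (Suc n) * Val D"
    have VOm: "V \<inter> \<Omega> = V" "\<Omega> \<inter> V = V" using spS[OF V] unfolding spec_space_def by blast+
    have C1Om: "\<Omega> \<inter> C1 = C1" using spC[OF C1(1)] unfolding spec_space_def by blast
    have c1d: "conv T C1 (V \<inter> D)" using trans[OF spC[OF C1(1)] spS[OF V] spI[OF V D] C1(2) VD] .
    then have c1d': "conv T (\<Omega> \<inter> C1) (V \<inter> D)" using C1Om by simp
    show "conv T \<Omega> V"
    proof (cases "Val C1 = 0")
      case True
      then have "conv T \<Omega> C1" by (rule zero[OF C1(1)])
      then show ?thesis by (rule trans[OF sp_Om spC[OF C1(1)] spS[OF V] _ C1(2)])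
    next
      case False
      then have p: "Val C1 > 0" using Valnn[OF C1(1)] by simp
      show ?thesis
      proof (cases "Val C1 \<le> Val D")
        case True
        have "ereal 0 < c_sup \<C> Val - ereal (Val D - Val C1)"
          using ereal_aux[OF csup_ge[OF D]] p by simp
        then obtain C2' where C2': "C2' \<in> \<C>" "conv T (\<Omega> \<inter> \<Omega>) (V \<inter> C2')"
          using F1[OF OmS V C1(1) D c1d' OmC] True ValOm p by auto
        have "conv T (V \<inter> C2') V" by (rule sub[OF spI[OF V C2'(1)] spS[OF V]]) blast
        moreover have "conv T \<Omega> (V \<inter> C2')" using C2'(2) by simp
        ultimately show ?thesis by (intro trans[OF sp_Om spI[OF V C2'(1)] spS[OF V]])
      next
        case False
        then obtain C1' where C1': "C1' \<in> \<C>" "conv T (\<Omega> \<inter> C1') (V \<inter> \<Omega>)"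
            "Val \<Omega> - Val C1' = Val D - Val C1"
          using F2[OF OmS V C1(1) D c1d' OmC] ValOm Valnn[OF D] by auto
        have "\<Omega> \<inter> C1' = C1'" using spC[OF C1'(1)] unfolding spec_space_def by blast
        then have "conv T C1' V" using C1'(2) VOm by simp
        moreover have "Val C1' \<le> real n * Val D" using C1'(3) ValOm C1(3)
          by (simp add: algebra_simps)
        ultimately show ?thesis using Suc.IH C1'(1) by blast
      qed
    qed
  qed
qed

lemma Om_V:
  assumes V: "V \<in> \<S>" and D: "D \<in> \<C>" and dpos: "Val D > 0" and VD: "conv T V (V \<inter> D)"
  shows "conv T \<Omega> V"
proof -
  obtain C0 where C0: "C0 \<in> \<C>" "conv T C0 V" using CU V unfolding currency_def by blast
  obtain n where "Val C0 < real n * Val D" using reals_Archimedean3[OF dpos] by blast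
  then have "Val C0 \<le> real n * Val D" by simp
  then show ?thesis by (rule induct_step[OF V D dpos VD, of n, THEN bspec, OF C0(1), THEN mp, OF C0(2), THEN mp])
qed

end

theorem mainTheorem19:
  fixes \<Omega> :: "'a set" and T :: "('a set \<Rightarrow> 'a set) set"
    and \<C> \<S> :: "'a set set" and Val :: "'a set \<Rightarrow> real"
    and V C :: "'a set"
  assumes "resource_theory \<Omega> T"
    and "currency \<Omega> T \<C> \<S>"
    and "value_function \<Omega> T \<C> Val"
    and "independent T \<C> \<S>"
    and "good_for_the_poor T \<C> \<S> Val"
    and "V \<in> \<S>" and "C \<in> \<C>"
    and "Balance T \<C> Val V V C > 0"
  shows "Yield T \<C> Val V \<ge> Balance T \<C> Val V V C \<and> Balance T \<C> Val V V C > 0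
         \<and> Cost T \<C> Val V = 0"
proof -
  note L = assms(1-5)
  have V: "V \<in> \<S>" and C: "C \<in> \<C>" by fact+
  from assms(8) obtain C' where C': "C' \<in> \<C>" "conv T (V \<inter> C) (V \<inter> C')"
      "0 < ereal (Val C' - Val C)"
    unfolding Balance_def by (auto simp: less_SUP_iff)
  then obtain D where D: "D \<in> \<C>" "Val D = Val C' - Val C" "conv T V (V \<inter> D)"
    using ladder[OF L V C] by auto
  have OmV: "conv T \<Omega> V" using Om_V[OF L V D(1) _ D(3)] D(2) C'(3) by simp
  have cost: "Cost T \<C> Val V = 0"
  proof (rule antisym)
    show "Cost T \<C> Val V \<le> 0" unfolding Cost_def
    proof -
      have "(INF C\<in>{C \<in> \<C>. conv T C V}. ereal (Val C)) \<le> ereal (Val \<Omega>)"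
        by (rule INF_lower) (simp add: OmV OmC[OF L])
      then show "(INF C\<in>{C \<in> \<C>. conv T C V}. ereal (Val C)) \<le> 0" using ValOm[OF L] by (metis zero_ereal_def)
    qed
    show "0 \<le> Cost T \<C> Val V" unfolding Cost_def
      using Valnn[OF L] by (auto intro!: INF_greatest)
  qed
  have y0: "ereal (Val X) \<le> Yield T \<C> Val V" if "X \<in> \<C>" "conv T V X" for X
    unfolding Yield_def using that by (auto intro!: SUP_upper)
  have BY: "Balance T \<C> Val V V C \<le> Yield T \<C> Val V"
    unfolding Balance_def
  proof (rule SUP_least)
    fix X assume X: "X \<in> {C' \<in> \<C>. conv T (V \<inter> C) (V \<inter> C')}"
    show "ereal (Val X - Val C) \<le> Yield T \<C> Val V"
    proof (cases "Val X > Val C")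
      case True
      then obtain D' where D': "D' \<in> \<C>" "Val D' = Val X - Val C" "conv T V (V \<inter> D')"
        using ladder[OF L V C] X by auto
      have "conv T (V \<inter> D') D'" by (rule sub[OF L spI[OF L V D'(1)] spC[OF L D'(1)]]) blast
      then have "conv T V D'" by (rule trans[OF L spS[OF L V] spI[OF L V D'(1)] spC[OF L D'(1)] D'(3)])
      then show ?thesis using y0[OF D'(1)] D'(2) by simp
    next
      case False
      have "V \<subseteq> \<Omega>" using spS[OF L V] unfolding spec_space_def by blast
      then have "conv T V \<Omega>" by (rule sub[OF L spS[OF L V] sp_Om[OF L]])
      then have "ereal 0 \<le> Yield T \<C> Val V" using y0[OF OmC[OF L]] ValOm[OF L] by simp
      moreover have "ereal (Val X - Val C) \<le> ereal 0" using False by simp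
      ultimately show ?thesis by (rule order_trans[rotated])
    qed
  qed
  show ?thesis by (rule conjI[OF BY conjI[OF assms(8) cost]])
qed

end
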